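(* Let $G$ be a dicotic nonzugzwang scoring game all of whose terminal positions are numbers. Then $G_{\sigma(G)}=m(G)$.
   Context: A scoring game is $G=\langle G^L\mid G^R\rangle$ with $G^L,G^R$ finite nonempty sets of scoring games or empty sets decorated with a real, $\emptyset^s$; $\langle\emptyset^s\mid\emptyset^s\rangle$ is the number $s$. $Ls(\langle\emptyset^s\mid G^R\rangle)=s$, $Rs(\langle G^L\mid\emptyset^s\rangle)=s$, otherwise $Ls(G)=\max_{G^l\in G^L}Rs(G^l)$, $Rs(G)=\min_{G^r\in G^R}Ls(G^r)$. Disjunctive sum $G_1+G_2$: Left options are all $G_1^l+G_2$, $G_1+G_2^l$ (Left side $\emptyset^{\ell_1+\ell_2}$ if neither has Left options); symmetrically for Right; $H+c$ for a number $c$ adds $c$ to every terminal score; $nG$ is the sum of $n$ copies of $G$. Dicotic: at every position both players have options or neither; nonzugzwang: $Ls(H)\ge Rs(H)$ at every position. For dicotic nonzugzwang $G$, the limits $\lim_{n\to\infty}Ls(nG)/n$ and $\lim_{n\to\infty}Rs(nG)/n$ exist and are equal (Milnor); their common value is the mean $m(G)$. Cooling: if $G$ is a number $k$, $G_t=k$, $\sigma(G)=0$; otherwise $\widetilde G_t=\langle \{G^l_t-t\}\mid \{G^r_t+t\}\rangle$, $t_0=\min\{t\ge0: Ls(\widetilde G_t)=Rs(\widetilde G_t)\}$, $G_t=\widetilde G_t$ for $t\le t_0$ and $G_t$ is the number $Ls(\widetilde G_{t_0})$ for $t>t_0$; $\sigma(G)=t_0$ is the temperature. Thus $G_{\sigma(G)}$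 is a number (namely $Ls(\widetilde G_{\sigma(G)})=Rs(\widetilde G_{\sigma(G)})$). *)

theory Defs
  imports Complex_Main
begin

text \<open>One side of a scoring game: either the empty set decorated with a real
  (\<open>Emp s\<close> = \<emptyset>^s) or a (finite) list of options.\<close>
datatype 'a side = Emp real | Opts "'a list"

datatype sg = SG "sg side" "sg side"

fun wf_sg :: "sg \<Rightarrow> bool" where
  "wf_sg (SG L R) =
     ((case L of Emp _ \<Rightarrow> True | Opts ls \<Rightarrow> ls \<noteq> [] \<and> (\<forall>g\<in>set ls. wf_sg g)) \<and>
      (case R of Emp _ \<Rightarrow> True | Opts rs \<Rightarrow> rs \<noteq> [] \<and> (\<forall>g\<in>set rs. wf_sg g)))"

definition num :: "real \<Rightarrow> sg" where
  "num s = SG (Emp s) (Emp s)"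

definition is_num :: "sg \<Rightarrow> bool" where
  "is_num G \<longleftrightarrow> (\<exists>s. G = num s)"

fun scores :: "sg \<Rightarrow> real \<times> real" where
  "scores (SG L R) =
     ((case L of Emp s \<Rightarrow> s | Opts ls \<Rightarrow> Max (set (map (\<lambda>g. snd (scores g)) ls))),
      (case R of Emp s \<Rightarrow> s | Opts rs \<Rightarrow> Min (set (map (\<lambda>g. fst (scores g)) rs))))"

definition Ls :: "sg \<Rightarrow> real" where "Ls G = fst (scores G)"
definition Rs :: "sg \<Rightarrow> real" where "Rs G = snd (scores G)"

fun plus_sg :: "sg \<Rightarrow> sg \<Rightarrow> sg" where
  "plus_sg (SG L1 R1) (SG L2 R2) =
     SG (case (L1, L2) of
           (Emp l1, Emp l2) \<Rightarrow> Emp (l1 + l2)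
         | (Opts ls, Emp _) \<Rightarrow> Opts (map (\<lambda>g. plus_sg g (SG L2 R2)) ls)
         | (Emp _, Opts ls') \<Rightarrow> Opts (map (\<lambda>g. plus_sg (SG L1 R1) g) ls')
         | (Opts ls, Opts ls') \<Rightarrow>
              Opts (map (\<lambda>g. plus_sg g (SG L2 R2)) ls @ map (\<lambda>g. plus_sg (SG L1 R1) g) ls'))
        (case (R1, R2) of
           (Emp r1, Emp r2) \<Rightarrow> Emp (r1 + r2)
         | (Opts rs, Emp _) \<Rightarrow> Opts (map (\<lambda>g. plus_sg g (SG L2 R2)) rs)
         | (Emp _, Opts rs') \<Rightarrow> Opts (map (\<lambda>g. plus_sg (SG L1 R1) g) rs')
         | (Opts rs, Opts rs') \<Rightarrow>
              Opts (map (\<lambda>g. plus_sg g (SG L2 R2)) rs @ map (\<lambda>g. plus_sg (SG L1 R1) g) rs'))"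

fun times_sg :: "nat \<Rightarrow> sg \<Rightarrow> sg" where
  "times_sg 0 G = num 0"
| "times_sg (Suc n) G = plus_sg G (times_sg n G)"

inductive position :: "sg \<Rightarrow> sg \<Rightarrow> bool" where
  self: "position G G"
| left: "position G (SG (Opts ls) R) \<Longrightarrow> g \<in> set ls \<Longrightarrow> position G g"
| right: "position G (SG L (Opts rs)) \<Longrightarrow> g \<in> set rs \<Longrightarrow> position G g"

definition dicotic :: "sg \<Rightarrow> bool" where
  "dicotic G \<longleftrightarrow> (\<forall>H L R. position G H \<longrightarrow> H = SG L R \<longrightarrow>
      ((\<exists>a. L = Emp a) \<longleftrightarrow> (\<exists>b. R = Emp b)))"

definition nonzugzwang :: "sg \<Rightarrow> bool" where
  "nonzugzwang G \<longleftrightarrow> (\<forall>H. position G H \<longrightarrow> Ls H \<ge> Rs H)"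

definition terminals_are_numbers :: "sg \<Rightarrow> bool" where
  "terminals_are_numbers G \<longleftrightarrow>
     (\<forall>a b. position G (SG (Emp a) (Emp b)) \<longrightarrow> a = b)"

definition mean :: "sg \<Rightarrow> real" where
  "mean G = lim (\<lambda>n. Ls (times_sg n G) / real n)"

lemma size_side_mem: "z \<in> set_side S \<Longrightarrow> size z < Suc (size_side size S)"
  by (cases S) (auto dest!: size_list_estimation' [where f=size and y="size z", OF _ order_refl])

function cool :: "sg \<Rightarrow> real \<Rightarrow> sg" where
  "cool (SG L R) t =
     (if is_num (SG L R) then SG L R else
      (let tl = (\<lambda>u. SG (map_side (\<lambda>g. plus_sg (cool g u) (num (- u))) L)
                         (map_side (\<lambda>g. plus_sg (cool g u) (num u)) R));
           t0 = Inf {u. u \<ge> 0 \<and> Ls (tl u) = Rs (tl u)}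
       in if t \<le> t0 then tl t else num (Ls (tl t0))))"
  by pat_completeness auto
termination
  by (relation "measure (\<lambda>p. size (fst p))")
     (auto dest!: size_side_mem)

fun cool_tilde :: "sg \<Rightarrow> real \<Rightarrow> sg" where
  "cool_tilde (SG L R) u =
     SG (map_side (\<lambda>g. plus_sg (cool g u) (num (- u))) L)
        (map_side (\<lambda>g. plus_sg (cool g u) (num u)) R)"

definition temperature :: "sg \<Rightarrow> real" where
  "temperature G = (if is_num G then 0 else
      Inf {u. u \<ge> 0 \<and> Ls (cool_tilde G u) = Rs (cool_tilde G u)})"

end

theory Submission
  imports Defs "HOL-Library.Multiset"
begin


fun shift :: "sg \<Rightarrow> real \<Rightarrow> sg" where
  "shift (SG L R) c = SG (case L of Emp a \<Rightarrow> Emp (a + c) | Opts ls \<Rightarrow> Opts (map (\<lambda>g. shift g c) ls))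
                        (case R of Emp a \<Rightarrow> Emp (a + c) | Opts ls \<Rightarrow> Opts (map (\<lambda>g. shift g c) ls))"

fun lopts :: "sg \<Rightarrow> sg list" where
  "lopts (SG (Opts ls) R) = ls" | "lopts (SG (Emp a) R) = []"
fun ropts :: "sg \<Rightarrow> sg list" where
  "ropts (SG L (Opts rs)) = rs" | "ropts (SG L (Emp a)) = []"

fun good :: "sg \<Rightarrow> bool" where
  "good (SG (Emp a) (Emp b)) = (a = b)"
| "good (SG (Opts ls) (Opts rs)) = (ls \<noteq> [] \<and> rs \<noteq> [] \<and> (\<forall>g\<in>set ls. good g) \<and> (\<forall>g\<in>set rs. good g)
     \<and> Rs (SG (Opts ls) (Opts rs)) \<le> Ls (SG (Opts ls) (Opts rs)))"
| "good (SG (Emp a) (Opts rs)) = False"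
| "good (SG (Opts ls) (Emp b)) = False"

lemma size_lopt: "g \<in> set ls \<Longrightarrow> size g < size (SG (Opts ls) R)"
  using size_list_estimation'[of g ls "size g" size] by auto
lemma size_ropt: "g \<in> set ls \<Longrightarrow> size g < size (SG L (Opts ls))"
  using size_list_estimation'[of g ls "size g" size] by auto

lemma Ls_Opts: "Ls (SG (Opts ls) R) = Max (Rs ` set ls)"
  by (simp add: Ls_def Rs_def)
lemma Rs_Opts: "Rs (SG L (Opts rs)) = Min (Ls ` set rs)"
  by (simp add: Ls_def Rs_def)
lemma Ls_Emp: "Ls (SG (Emp a) R) = a"
  by (simp add: Ls_def)
lemma Rs_Emp: "Rs (SG L (Emp a)) = a"
  by (simp add: Rs_def)
lemma Ls_num[simp]: "Ls (num a) = a" and Rs_num[simp]: "Rs (num a) = a"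
  by (simp_all add: num_def Ls_Emp Rs_Emp)

lemma is_num_SG: "is_num (SG L R) \<longleftrightarrow> (\<exists>a. L = Emp a \<and> R = Emp a)"
  by (auto simp: is_num_def num_def)

lemma is_num_eq: "is_num x \<Longrightarrow> x = num (Ls x)"
  by (auto simp: is_num_def)

lemma good_num[simp]: "good (num a)" by (simp add: num_def)

lemma good_cases:
  assumes "good H"
  obtains a where "H = num a"
  | ls rs where "H = SG (Opts ls) (Opts rs)" "ls \<noteq> []" "rs \<noteq> []" "\<forall>g\<in>set ls. good g"
      "\<forall>g\<in>set rs. good g" "Rs H \<le> Ls H"
proof (cases H)
  case (SG L R)
  then show ?thesis using assms that by (cases L; cases R) (auto simp: num_def)
qed

lemma good_nz: "good H \<Longrightarrow> Rs H \<le> Ls H"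
  by (erule good_cases) auto

lemma good_wf: "good H \<Longrightarrow> wf_sg H"
proof (induction H)
  case (SG L R)
  then show ?case by (cases L; cases R) auto
qed

lemma lopts_num[simp]: "lopts (num a) = []" and ropts_num[simp]: "ropts (num a) = []"
  by (simp_all add: num_def)

lemma is_num_lopts: "good H \<Longrightarrow> is_num H \<longleftrightarrow> lopts H = []"
  by (erule good_cases) (auto simp: is_num_def num_def)
lemma is_num_ropts: "good H \<Longrightarrow> is_num H \<longleftrightarrow> ropts H = []"
  by (erule good_cases) (auto simp: is_num_def num_def)

lemma Max_plus_const: "finite A \<Longrightarrow> A \<noteq> {} \<Longrightarrow> Max ((\<lambda>x. f x + c) ` A) = Max (f ` A) + (c::real)"
proof -
  assume "finite A" "A \<noteq> {}"
  have "mono (\<lambda>y::real. y + c)" by (auto simp: mono_def)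
  from mono_Max_commute[OF this, of "f ` A"] \<open>finite A\<close> \<open>A \<noteq> {}\<close>
  show ?thesis by (simp add: image_image)
qed
lemma Min_plus_const: "finite A \<Longrightarrow> A \<noteq> {} \<Longrightarrow> Min ((\<lambda>x. f x + c) ` A) = Min (f ` A) + (c::real)"
proof -
  assume "finite A" "A \<noteq> {}"
  have "mono (\<lambda>y::real. y + c)" by (auto simp: mono_def)
  from mono_Min_commute[OF this, of "f ` A"] \<open>finite A\<close> \<open>A \<noteq> {}\<close>
  show ?thesis by (simp add: image_image)
qed

lemma shift_scores: "wf_sg X \<Longrightarrow> Ls (shift X c) = Ls X + c \<and> Rs (shift X c) = Rs X + c"
proof (induction X)
  case (SG L R)
  show ?case
  proof (cases L; cases R)
    fix ls rs assume L: "L = Opts ls" and R: "R = Opts rs"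
    have IH: "\<And>g. g \<in> set ls \<or> g \<in> set rs \<Longrightarrow> Ls (shift g c) = Ls g + c \<and> Rs (shift g c) = Rs g + c"
      using SG L R by auto
    have ne: "ls \<noteq> []" "rs \<noteq> []" using SG.prems L R by auto
    have "Ls (shift (SG L R) c) = Max ((\<lambda>g. Rs g + c) ` set ls)"
      using IH by (simp add: L R Ls_Opts image_image cong: image_cong)
    also have "\<dots> = Ls (SG L R) + c" using ne by (simp add: Max_plus_const L Ls_Opts)
    finally have 1: "Ls (shift (SG L R) c) = Ls (SG L R) + c" .
    have "Rs (shift (SG L R) c) = Min ((\<lambda>g. Ls g + c) ` set rs)"
      using IH by (simp add: L R Rs_Opts image_image cong: image_cong)
    also have "\<dots> = Rs (SG L R) + c" using ne by (simp add: Min_plus_const R Rs_Opts)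
    finally show ?thesis using 1 by simp
  next
    fix ls b assume L: "L = Opts ls" and R: "R = Emp b"
    have IH: "\<And>g. g \<in> set ls \<Longrightarrow> Ls (shift g c) = Ls g + c \<and> Rs (shift g c) = Rs g + c"
      using SG L R by auto
    have ne: "ls \<noteq> []" using SG.prems L R by auto
    have "Ls (shift (SG L R) c) = Max ((\<lambda>g. Rs g + c) ` set ls)"
      using IH by (simp add: L R Ls_Opts image_image cong: image_cong)
    also have "\<dots> = Ls (SG L R) + c" using ne by (simp add: Max_plus_const L Ls_Opts)
    finally show ?thesis by (simp add: R Rs_Emp)
  next
    fix a rs assume L: "L = Emp a" and R: "R = Opts rs"
    have IH: "\<And>g. g \<in> set rs \<Longrightarrow> Ls (shift g c) = Ls g + c \<and> Rs (shift g c) = Rs g + c"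
      using SG L R by auto
    have ne: "rs \<noteq> []" using SG.prems L R by auto
    have "Rs (shift (SG L R) c) = Min ((\<lambda>g. Ls g + c) ` set rs)"
      using IH by (simp add: L R Rs_Opts image_image cong: image_cong)
    also have "\<dots> = Rs (SG L R) + c" using ne by (simp add: Min_plus_const R Rs_Opts)
    finally show ?thesis by (simp add: L Ls_Emp)
  qed (simp_all add: Ls_Emp Rs_Emp)
qed

lemma wf_shift: "wf_sg X \<Longrightarrow> wf_sg (shift X c)"
proof (induction X)
  case (SG L R)
  then show ?case by (cases L; cases R) auto
qed

lemma good_shift: "good X \<Longrightarrow> good (shift X c)"
proof (induction X)
  case (SG L R)
  show ?case
  proof (cases L; cases R)
    fix ls rs assume L: "L = Opts ls" and R: "R = Opts rs"
    have w: "wf_sg (SG L R)" using SG.prems good_wf by blast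
    have "Rs (shift (SG L R) c) \<le> Ls (shift (SG L R) c)"
      using shift_scores[OF w, of c] good_nz[OF SG.prems] by simp
    then show ?thesis using SG L R by auto
  qed (use SG in auto)
qed

lemma shift_num[simp]: "shift (num a) c = num (a + c)" by (simp add: num_def)

lemma plus_num: "plus_sg X (num c) = shift X c"
proof (induction X)
  case (SG L R)
  show ?case
    using SG.IH by (cases L; cases R) (auto simp: num_def)
qed

lemma plus_num_left: "plus_sg (num c) X = shift X c"
proof (induction X)
  case (SG L R)
  show ?case
    using SG.IH by (cases L; cases R) (auto simp: num_def add.commute)
qed

lemma plus_shift_left: "plus_sg (shift A c) B = shift (plus_sg A B) c"
proof (induction A B rule: plus_sg.induct)
  case (1 L1 R1 L2 R2)
  show ?case using 1 by (cases L1; cases R1; cases L2; cases R2) (auto simp: algebra_simps)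
qed

lemma plus_shift_right: "plus_sg A (shift B c) = shift (plus_sg A B) c"
proof (induction A B rule: plus_sg.induct)
  case (1 L1 R1 L2 R2)
  show ?case using 1 by (cases L1; cases R1; cases L2; cases R2) (auto simp: algebra_simps)
qed

lemma wf_plus: "wf_sg A \<Longrightarrow> wf_sg B \<Longrightarrow> wf_sg (plus_sg A B)"
proof (induction A B rule: plus_sg.induct)
  case (1 L1 R1 L2 R2)
  show ?case using 1 by (cases L1; cases R1; cases L2; cases R2) auto
qed



definition sumL :: "sg list \<Rightarrow> sg" where "sumL xs = foldr plus_sg xs (num 0)"

lemma sumL_Nil[simp]: "sumL [] = num 0" and sumL_Cons[simp]: "sumL (x # xs) = plus_sg x (sumL xs)"
  by (simp_all add: sumL_def)

definition lmove :: "sg list \<Rightarrow> sg list \<Rightarrow> bool" where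
  "lmove xs ys \<longleftrightarrow> (\<exists>i<length xs. \<exists>g\<in>set (lopts (xs ! i)). ys = xs[i := g])"
definition rmove :: "sg list \<Rightarrow> sg list \<Rightarrow> bool" where
  "rmove xs ys \<longleftrightarrow> (\<exists>i<length xs. \<exists>g\<in>set (ropts (xs ! i)). ys = xs[i := g])"
definition allnum :: "sg list \<Rightarrow> bool" where
  "allnum xs \<longleftrightarrow> (\<forall>x\<in>set xs. is_num x)"
definition allgood :: "sg list \<Rightarrow> bool" where
  "allgood xs \<longleftrightarrow> (\<forall>x\<in>set xs. good x)"
definition msize :: "sg list \<Rightarrow> nat" where
  "msize xs = sum_list (map size xs)"

lemma lmove_Cons: "lmove (x # xs) ys \<longleftrightarrow> (\<exists>g\<in>set (lopts x). ys = g # xs) \<or> (\<exists>ys'. lmove xs ys' \<and> ys = x # ys')"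
proof
  assume "lmove (x # xs) ys"
  then obtain i g where i: "i < length (x # xs)" "g \<in> set (lopts ((x # xs) ! i))" "ys = (x # xs)[i := g]"
    unfolding lmove_def by blast
  show "(\<exists>g\<in>set (lopts x). ys = g # xs) \<or> (\<exists>ys'. lmove xs ys' \<and> ys = x # ys')"
  proof (cases i)
    case 0 then show ?thesis using i by auto
  next
    case (Suc j) then show ?thesis using i unfolding lmove_def by auto
  qed
next
  assume "(\<exists>g\<in>set (lopts x). ys = g # xs) \<or> (\<exists>ys'. lmove xs ys' \<and> ys = x # ys')"
  then show "lmove (x # xs) ys"
  proof
    assume "\<exists>g\<in>set (lopts x). ys = g # xs"
    then show ?thesis unfolding lmove_def by (intro exI[of _ 0]) auto
  next
    assume "\<exists>ys'. lmove xs ys' \<and> ys = x # ys'"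
    then obtain i g where "i < length xs" "g \<in> set (lopts (xs ! i))" "ys = x # xs[i := g]"
      unfolding lmove_def by blast
    then show ?thesis unfolding lmove_def by (intro exI[of _ "Suc i"]) auto
  qed
qed

lemma rmove_Cons: "rmove (x # xs) ys \<longleftrightarrow> (\<exists>g\<in>set (ropts x). ys = g # xs) \<or> (\<exists>ys'. rmove xs ys' \<and> ys = x # ys')"
proof
  assume "rmove (x # xs) ys"
  then obtain i g where i: "i < length (x # xs)" "g \<in> set (ropts ((x # xs) ! i))" "ys = (x # xs)[i := g]"
    unfolding rmove_def by blast
  show "(\<exists>g\<in>set (ropts x). ys = g # xs) \<or> (\<exists>ys'. rmove xs ys' \<and> ys = x # ys')"
  proof (cases i)
    case 0 then show ?thesis using i by auto
  next
    case (Suc j) then show ?thesis using i unfolding rmove_def by auto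
  qed
next
  assume "(\<exists>g\<in>set (ropts x). ys = g # xs) \<or> (\<exists>ys'. rmove xs ys' \<and> ys = x # ys')"
  then show "rmove (x # xs) ys"
  proof
    assume "\<exists>g\<in>set (ropts x). ys = g # xs"
    then show ?thesis unfolding rmove_def by (intro exI[of _ 0]) auto
  next
    assume "\<exists>ys'. rmove xs ys' \<and> ys = x # ys'"
    then obtain i g where "i < length xs" "g \<in> set (ropts (xs ! i))" "ys = x # xs[i := g]"
      unfolding rmove_def by blast
    then show ?thesis unfolding rmove_def by (intro exI[of _ "Suc i"]) auto
  qed
qed

lemma allnum_Cons[simp]: "allnum (x # xs) \<longleftrightarrow> is_num x \<and> allnum xs" by (simp add: allnum_def)
lemma allgood_Cons[simp]: "allgood (x # xs) \<longleftrightarrow> good x \<and> allgood xs" by (simp add: allgood_def)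
lemma allnum_Nil[simp]: "allnum []" and allgood_Nil[simp]: "allgood []"
  by (simp_all add: allnum_def allgood_def)

lemma allnum_sumL: "allnum xs \<Longrightarrow> sumL xs = num (\<Sum>x\<leftarrow>xs. Ls x)"
proof (induction xs)
  case (Cons x xs)
  then have "x = num (Ls x)" using is_num_eq by auto
  then have "sumL (x # xs) = plus_sg (num (Ls x)) (num (\<Sum>x\<leftarrow>xs. Ls x))" using Cons by simp
  then show ?case by (simp add: plus_num)
qed simp

lemma lopt_good: "good x \<Longrightarrow> g \<in> set (lopts x) \<Longrightarrow> good g"
  by (erule good_cases) auto
lemma ropt_good: "good x \<Longrightarrow> g \<in> set (ropts x) \<Longrightarrow> good g"
  by (erule good_cases) auto

lemma lopt_size: "g \<in> set (lopts x) \<Longrightarrow> size g < size x"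
proof (cases x rule: lopts.cases)
  case (1 ls R) assume "g \<in> set (lopts x)" then show ?thesis using size_lopt[of g ls R] 1 by simp
qed simp
lemma ropt_size: "g \<in> set (ropts x) \<Longrightarrow> size g < size x"
proof (cases x rule: ropts.cases)
  case (1 L rs) assume "g \<in> set (ropts x)" then show ?thesis using size_ropt[of g rs L] 1 by simp
qed simp

lemma msize_update: "i < length xs \<Longrightarrow> size g < size (xs ! i) \<Longrightarrow> msize (xs[i := g]) < msize xs"
proof (induction xs arbitrary: i)
  case (Cons x xs)
  then show ?case by (cases i) (auto simp: msize_def)
qed simp

lemma lmove_msize: "lmove xs ys \<Longrightarrow> msize ys < msize xs"
  unfolding lmove_def using msize_update lopt_size by blast
lemma rmove_msize: "rmove xs ys \<Longrightarrow> msize ys < msize xs"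
  unfolding rmove_def using msize_update ropt_size by blast

lemma lmove_good: "lmove xs ys \<Longrightarrow> allgood xs \<Longrightarrow> allgood ys"
  unfolding lmove_def allgood_def using lopt_good by (auto simp: set_update_subset_insert[THEN subsetD] dest!: set_update_subset_insert[THEN subsetD] ) (metis nth_mem)+
lemma rmove_good: "rmove xs ys \<Longrightarrow> allgood xs \<Longrightarrow> allgood ys"
  unfolding rmove_def allgood_def using ropt_good by (auto dest!: set_update_subset_insert[THEN subsetD]) (metis nth_mem)+

lemma no_lmove: "allnum xs \<Longrightarrow> \<not> lmove xs ys"
  unfolding allnum_def lmove_def by (auto simp: is_num_def) (metis nth_mem lopts_num empty_iff empty_set)
lemma no_rmove: "allnum xs \<Longrightarrow> \<not> rmove xs ys"
  unfolding allnum_def rmove_def by (auto simp: is_num_def) (metis nth_mem ropts_num empty_iff empty_set)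

lemma sumL_struct:
  assumes "allgood xs" "\<not> allnum xs"
  shows "\<exists>LL RR. sumL xs = SG (Opts LL) (Opts RR) \<and> set LL = sumL ` {ys. lmove xs ys}
            \<and> set RR = sumL ` {ys. rmove xs ys} \<and> LL \<noteq> [] \<and> RR \<noteq> []"
  using assms
proof (induction xs)
  case Nil then show ?case by simp
next
  case (Cons x xs)
  have gx: "good x" and gxs: "allgood xs" using Cons.prems by auto
  have LM: "{ys. lmove (x # xs) ys} = (\<lambda>g. g # xs) ` set (lopts x) \<union> (\<lambda>ys. x # ys) ` {ys. lmove xs ys}"
    by (auto simp: lmove_Cons)
  have RM: "{ys. rmove (x # xs) ys} = (\<lambda>g. g # xs) ` set (ropts x) \<union> (\<lambda>ys. x # ys) ` {ys. rmove xs ys}"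
    by (auto simp: rmove_Cons)
  show ?case
  proof (cases "allnum xs")
    case True
    then have s: "sumL xs = num (\<Sum>x\<leftarrow>xs. Ls x)" by (rule allnum_sumL)
    have nl: "{ys. lmove xs ys} = {}" "{ys. rmove xs ys} = {}" using True no_lmove no_rmove by auto
    from True Cons.prems have nx: "\<not> is_num x" by simp
    from gx nx obtain ls rs where x: "x = SG (Opts ls) (Opts rs)" "ls \<noteq> []" "rs \<noteq> []"
      by (cases rule: good_cases) (auto simp: is_num_def)
    show ?thesis unfolding LM RM
      by (rule exI[of _ "map (\<lambda>g. plus_sg g (sumL xs)) ls"], rule exI[of _ "map (\<lambda>g. plus_sg g (sumL xs)) rs"])
         (simp add: s x LM RM nl num_def image_image)
  next
    case False
    from Cons.IH[OF gxs False] obtain LL RR where IH: "sumL xs = SG (Opts LL) (Opts RR)"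
      "set LL = sumL ` {ys. lmove xs ys}" "set RR = sumL ` {ys. rmove xs ys}" "LL \<noteq> []" "RR \<noteq> []"
      by blast
    from gx show ?thesis
    proof (cases rule: good_cases)
      case (1 a)
      show ?thesis unfolding LM RM
        by (rule exI[of _ "map (\<lambda>g. plus_sg x g) LL"], rule exI[of _ "map (\<lambda>g. plus_sg x g) RR"])
           (simp add: 1 IH LM RM num_def image_image)
    next
      case (2 ls rs)
      show ?thesis unfolding LM RM
        by (rule exI[of _ "map (\<lambda>g. plus_sg g (sumL xs)) ls @ map (\<lambda>g. plus_sg x g) LL"],
            rule exI[of _ "map (\<lambda>g. plus_sg g (sumL xs)) rs @ map (\<lambda>g. plus_sg x g) RR"])
           (simp add: 2 IH LM RM image_image image_Un)
    qed
  qed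
qed



lemma wf_sumL: "allgood xs \<Longrightarrow> wf_sg (sumL xs)"
  by (induction xs) (auto simp: wf_plus good_wf num_def)

lemma allnum_scores: "allnum xs \<Longrightarrow> Ls (sumL xs) = (\<Sum>x\<leftarrow>xs. Ls x) \<and> Rs (sumL xs) = (\<Sum>x\<leftarrow>xs. Ls x)"
  by (simp add: allnum_sumL)

lemma L1: "allgood xs \<Longrightarrow> lmove xs ys \<Longrightarrow> Rs (sumL ys) \<le> Ls (sumL xs)"
proof -
  assume g: "allgood xs" and m: "lmove xs ys"
  then have "\<not> allnum xs" using no_lmove by blast
  from sumL_struct[OF g this] obtain LL RR where s: "sumL xs = SG (Opts LL) (Opts RR)"
    "set LL = sumL ` {ys. lmove xs ys}" by blast
  have "sumL ys \<in> set LL" using s m by auto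
  then have "Rs (sumL ys) \<le> Max (Rs ` set LL)" by (intro Max_ge) auto
  then show ?thesis using s(1) by (simp add: Ls_Opts)
qed

lemma R1: "allgood xs \<Longrightarrow> rmove xs ys \<Longrightarrow> Rs (sumL xs) \<le> Ls (sumL ys)"
proof -
  assume g: "allgood xs" and m: "rmove xs ys"
  then have "\<not> allnum xs" using no_rmove by blast
  from sumL_struct[OF g this] obtain LL RR where s: "sumL xs = SG (Opts LL) (Opts RR)"
    "set RR = sumL ` {ys. rmove xs ys}" by blast
  have "sumL ys \<in> set RR" using s m by auto
  then have "Min (Ls ` set RR) \<le> Ls (sumL ys)" by (intro Min_le) auto
  then show ?thesis using s(1) by (simp add: Rs_Opts)
qed

lemma L2: "allgood xs \<Longrightarrow> \<not> allnum xs \<Longrightarrow> \<exists>ys. lmove xs ys \<and> Ls (sumL xs) = Rs (sumL ys)"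
proof -
  assume g: "allgood xs" and n: "\<not> allnum xs"
  from sumL_struct[OF g n] obtain LL RR where s: "sumL xs = SG (Opts LL) (Opts RR)"
    "set LL = sumL ` {ys. lmove xs ys}" "LL \<noteq> []" by blast
  have "Max (Rs ` set LL) \<in> Rs ` set LL" using s(3) by (intro Max_in) auto
  then obtain z where z: "z \<in> set LL" "Max (Rs ` set LL) = Rs z" by auto
  then obtain ys where "lmove xs ys" "z = sumL ys" using s(2) by auto
  then show ?thesis using z s(1) by (auto simp: Ls_Opts)
qed

lemma R2: "allgood xs \<Longrightarrow> \<not> allnum xs \<Longrightarrow> \<exists>ys. rmove xs ys \<and> Rs (sumL xs) = Ls (sumL ys)"
proof -
  assume g: "allgood xs" and n: "\<not> allnum xs"
  from sumL_struct[OF g n] obtain LL RR where s: "sumL xs = SG (Opts LL) (Opts RR)"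
    "set RR = sumL ` {ys. rmove xs ys}" "RR \<noteq> []" by blast
  have "Min (Ls ` set RR) \<in> Ls ` set RR" using s(3) by (intro Min_in) auto
  then obtain z where z: "z \<in> set RR" "Min (Ls ` set RR) = Ls z" by auto
  then obtain ys where "rmove xs ys" "z = sumL ys" using s(2) by auto
  then show ?thesis using z s(1) by (auto simp: Rs_Opts)
qed

lemma L3: "allgood xs \<Longrightarrow> \<not> allnum xs \<Longrightarrow> (\<And>ys. lmove xs ys \<Longrightarrow> Rs (sumL ys) \<le> B) \<Longrightarrow> Ls (sumL xs) \<le> B"
  using L2 by metis
lemma R3: "allgood xs \<Longrightarrow> \<not> allnum xs \<Longrightarrow> (\<And>ys. rmove xs ys \<Longrightarrow> B \<le> Ls (sumL ys)) \<Longrightarrow> B \<le> Rs (sumL xs)"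
  using R2 by metis

lemma msize_mset: "mset xs = mset ys \<Longrightarrow> msize xs = msize ys"
  unfolding msize_def by (metis mset_map sum_mset_sum_list)

lemma sum_list_mset: "mset xs = mset ys \<Longrightarrow> (\<Sum>x\<leftarrow>xs. f x) = (\<Sum>x\<leftarrow>ys. (f x :: real))"
  by (metis mset_map sum_mset_sum_list)

lemma lmove_perm: "mset xs = mset ys \<Longrightarrow> lmove xs xs' \<Longrightarrow> \<exists>ys'. lmove ys ys' \<and> mset xs' = mset ys'"
proof -
  assume e: "mset xs = mset ys" and "lmove xs xs'"
  then obtain i g where i: "i < length xs" "g \<in> set (lopts (xs ! i))" "xs' = xs[i := g]"
    unfolding lmove_def by blast
  have "xs ! i \<in> set ys" using e i by (metis nth_mem set_mset_mset)
  then obtain j where j: "j < length ys" "ys ! j = xs ! i" by (metis in_set_conv_nth)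
  have "lmove ys (ys[j := g])" unfolding lmove_def using j i by (intro exI[of _ j]) auto
  moreover have "mset xs' = mset (ys[j := g])" using i j e by (simp add: mset_update)
  ultimately show ?thesis by blast
qed

lemma rmove_perm: "mset xs = mset ys \<Longrightarrow> rmove xs xs' \<Longrightarrow> \<exists>ys'. rmove ys ys' \<and> mset xs' = mset ys'"
proof -
  assume e: "mset xs = mset ys" and "rmove xs xs'"
  then obtain i g where i: "i < length xs" "g \<in> set (ropts (xs ! i))" "xs' = xs[i := g]"
    unfolding rmove_def by blast
  have "xs ! i \<in> set ys" using e i by (metis nth_mem set_mset_mset)
  then obtain j where j: "j < length ys" "ys ! j = xs ! i" by (metis in_set_conv_nth)
  have "rmove ys (ys[j := g])" unfolding rmove_def using j i by (intro exI[of _ j]) auto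
  moreover have "mset xs' = mset (ys[j := g])" using i j e by (simp add: mset_update)
  ultimately show ?thesis by blast
qed

lemma allgood_mset: "mset xs = mset ys \<Longrightarrow> allgood xs \<Longrightarrow> allgood ys"
  unfolding allgood_def by (metis set_mset_mset)
lemma allnum_mset: "mset xs = mset ys \<Longrightarrow> allnum xs \<longleftrightarrow> allnum ys"
  unfolding allnum_def by (metis set_mset_mset)

lemma perm_scores:
  "allgood xs \<Longrightarrow> mset xs = mset ys \<Longrightarrow> Ls (sumL xs) = Ls (sumL ys) \<and> Rs (sumL xs) = Rs (sumL ys)"
proof (induction "msize xs" arbitrary: xs ys rule: less_induct)
  case less
  have half: "Ls (sumL a) \<le> Ls (sumL b) \<and> Rs (sumL b) \<le> Rs (sumL a)"
    if ab: "mset a = mset b" "allgood a" "msize a = msize xs" for a b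
  proof
    have gb: "allgood b" using ab allgood_mset by blast
    show "Ls (sumL a) \<le> Ls (sumL b)"
    proof (cases "allnum a")
      case True
      then have "allnum b" using ab allnum_mset by blast
      then show ?thesis using True ab by (simp add: allnum_sumL sum_list_mset[of a b])
    next
      case False
      from L2[OF ab(2) False] obtain a' where a': "lmove a a'" "Ls (sumL a) = Rs (sumL a')" by blast
      from lmove_perm[OF ab(1) a'(1)] obtain b' where b': "lmove b b'" "mset a' = mset b'" by blast
      have "msize a' < msize xs" using lmove_msize[OF a'(1)] ab by simp
      from less.hyps[OF this _ b'(2)] have "Rs (sumL a') = Rs (sumL b')"
        using lmove_good[OF a'(1) ab(2)] by blast
      then show ?thesis using a' L1[OF gb b'(1)] by simp
    qed
    show "Rs (sumL b) \<le> Rs (sumL a)"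
    proof (cases "allnum a")
      case True
      then have "allnum b" using ab allnum_mset by blast
      then show ?thesis using True ab by (simp add: allnum_sumL sum_list_mset[of a b])
    next
      case False
      from R2[OF ab(2) False] obtain a' where a': "rmove a a'" "Rs (sumL a) = Ls (sumL a')" by blast
      from rmove_perm[OF ab(1) a'(1)] obtain b' where b': "rmove b b'" "mset a' = mset b'" by blast
      have "msize a' < msize xs" using rmove_msize[OF a'(1)] ab by simp
      from less.hyps[OF this _ b'(2)] have "Ls (sumL a') = Ls (sumL b')"
        using rmove_good[OF a'(1) ab(2)] by blast
      then show ?thesis using a' R1[OF gb b'(1)] by simp
    qed
  qed
  have gy: "allgood ys" using less allgood_mset by blast
  have "msize ys = msize xs" using less msize_mset by metis
  then show ?case using half[OF less(3) less(2)] half[OF less(3)[symmetric] gy] by auto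
qed



lemma shift_zero[simp]: "shift X 0 = X"
proof (induction X)
  case (SG L R)
  then show ?case by (cases L; cases R) (auto intro: map_idI)
qed

lemma sumL_single[simp]: "sumL [K] = K" by (simp add: plus_num)

lemma size_pos: "0 < size (X::sg)" by (cases X) auto

lemma sumL_num_Cons: "allgood ys \<Longrightarrow> Ls (sumL (num a # ys)) = Ls (sumL ys) + a \<and> Rs (sumL (num a # ys)) = Rs (sumL ys) + a"
  by (simp add: plus_num_left shift_scores wf_sumL)

lemma sumL_Cons_allnum: "good K \<Longrightarrow> allnum ys \<Longrightarrow>
   Ls (sumL (K # ys)) = Ls K + (\<Sum>x\<leftarrow>ys. Ls x) \<and> Rs (sumL (K # ys)) = Rs K + (\<Sum>x\<leftarrow>ys. Ls x)"
  by (simp add: allnum_sumL plus_num shift_scores good_wf)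

lemma msize_Cons[simp]: "msize (x # xs) = size x + msize xs" by (simp add: msize_def)
lemma msize_Nil[simp]: "msize [] = 0" by (simp add: msize_def)

lemma milnor:
  "good K \<Longrightarrow> allgood ys \<Longrightarrow>
   Rs K + Rs (sumL ys) \<le> Rs (sumL (K # ys)) \<and>
   Ls K + Rs (sumL ys) \<le> Ls (sumL (K # ys)) \<and>
   Rs K + Ls (sumL ys) \<le> Ls (sumL (K # ys)) \<and>
   Ls (sumL (K # ys)) \<le> Ls K + Ls (sumL ys) \<and>
   Rs (sumL (K # ys)) \<le> Rs K + Ls (sumL ys) \<and>
   Rs (sumL (K # ys)) \<le> Ls K + Rs (sumL ys)"
proof (induction "size K + msize ys" arbitrary: K ys rule: less_induct)
  case less
  note IH = less.hyps
  have gK: "good K" and gys: "allgood ys" by fact+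
  have gKys: "allgood (K # ys)" using gK gys by simp
  have N: "Rs (sumL zs) \<le> Ls (sumL zs)" if "allgood zs" "msize zs \<le> msize ys" for zs
  proof (cases zs)
    case Nil then show ?thesis by simp
  next
    case (Cons z zs0)
    have "size z + msize zs0 < size K + msize ys" using that Cons size_pos[of K] by simp
    from IH[OF this] that Cons show ?thesis by force
  qed
  have Nys: "Rs (sumL ys) \<le> Ls (sumL ys)" using N gys by simp
  have nzK: "Rs K \<le> Ls K" using gK good_nz by blast
  have Kl0: "\<And>k. k \<in> set (lopts K) \<Longrightarrow> Rs k \<le> Ls K \<and> good k"
    using gK by (cases rule: good_cases) (auto simp: Ls_Opts)
  have Kr0: "\<And>k. k \<in> set (ropts K) \<Longrightarrow> Rs K \<le> Ls k \<and> good k"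
    using gK by (cases rule: good_cases) (auto simp: Rs_Opts)
  have Kl: "\<And>k. k \<in> set (lopts K) \<Longrightarrow> Rs k \<le> Ls K \<and> good k \<and> size k < size K"
    using Kl0 lopt_size by blast
  have Kr: "\<And>k. k \<in> set (ropts K) \<Longrightarrow> Rs K \<le> Ls k \<and> good k \<and> size k < size K"
    using Kr0 ropt_size by blast
  have Klex: "\<not> is_num K \<Longrightarrow> \<exists>k\<in>set (lopts K). Rs k = Ls K"
    using gK
  proof (cases rule: good_cases)
    case (2 ls rs)
    have "Max (Rs ` set ls) \<in> Rs ` set ls" using 2 by (intro Max_in) auto
    then obtain k where "k \<in> set ls" "Max (Rs ` set ls) = Rs k" by blast
    then show ?thesis using 2(1) by (auto simp: Ls_Opts)
  qed (auto simp: is_num_def)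
  have Krex: "\<not> is_num K \<Longrightarrow> \<exists>k\<in>set (ropts K). Ls k = Rs K"
    using gK
  proof (cases rule: good_cases)
    case (2 ls rs)
    have "Min (Ls ` set rs) \<in> Ls ` set rs" using 2 by (intro Min_in) auto
    then obtain k where "k \<in> set rs" "Min (Ls ` set rs) = Ls k" by blast
    then show ?thesis using 2(1) by (auto simp: Rs_Opts)
  qed (auto simp: is_num_def)
  have lK: "lmove (K # ys) (k # ys)" if "k \<in> set (lopts K)" for k using that by (auto simp: lmove_Cons)
  have rK: "rmove (K # ys) (k # ys)" if "k \<in> set (ropts K)" for k using that by (auto simp: rmove_Cons)
  have lY: "lmove (K # ys) (K # ys')" if "lmove ys ys'" for ys' using that by (auto simp: lmove_Cons)
  have rY: "rmove (K # ys) (K # ys')" if "rmove ys ys'" for ys' using that by (auto simp: rmove_Cons)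
  have IHk: "\<And>k. size k < size K \<Longrightarrow> good k \<Longrightarrow> Rs k + Rs (sumL ys) \<le> Rs (sumL (k # ys)) \<and>
   Ls k + Rs (sumL ys) \<le> Ls (sumL (k # ys)) \<and>
   Rs k + Ls (sumL ys) \<le> Ls (sumL (k # ys)) \<and>
   Ls (sumL (k # ys)) \<le> Ls k + Ls (sumL ys) \<and>
   Rs (sumL (k # ys)) \<le> Rs k + Ls (sumL ys) \<and>
   Rs (sumL (k # ys)) \<le> Ls k + Rs (sumL ys)"
    using IH gys by simp
  have IHy: "\<And>ys'. msize ys' < msize ys \<Longrightarrow> allgood ys' \<Longrightarrow> Rs K + Rs (sumL ys') \<le> Rs (sumL (K # ys')) \<and>
   Ls K + Rs (sumL ys') \<le> Ls (sumL (K # ys')) \<and>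
   Rs K + Ls (sumL ys') \<le> Ls (sumL (K # ys')) \<and>
   Ls (sumL (K # ys')) \<le> Ls K + Ls (sumL ys') \<and>
   Rs (sumL (K # ys')) \<le> Rs K + Ls (sumL ys') \<and>
   Rs (sumL (K # ys')) \<le> Ls K + Rs (sumL ys')"
    using IH gK by simp
  have Mb: "Ls K + Rs (sumL ys) \<le> Ls (sumL (K # ys))"
  proof (cases "is_num K")
    case True
    then obtain a where "K = num a" by (auto simp: is_num_def)
    then show ?thesis using sumL_num_Cons[OF gys, of a] Nys by simp
  next
    case False
    then obtain k where k: "k \<in> set (lopts K)" "Rs k = Ls K" using Klex by blast
    have "Rs (sumL (k # ys)) \<le> Ls (sumL (K # ys))" using L1[OF gKys lK[OF k(1)]] .
    moreover have "Rs k + Rs (sumL ys) \<le> Rs (sumL (k # ys))" using IHk Kl k(1) by blast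
    ultimately show ?thesis using k by simp
  qed
  have Mbp: "Rs (sumL (K # ys)) \<le> Rs K + Ls (sumL ys)"
  proof (cases "is_num K")
    case True
    then obtain a where "K = num a" by (auto simp: is_num_def)
    then show ?thesis using sumL_num_Cons[OF gys, of a] Nys by simp
  next
    case False
    then obtain k where k: "k \<in> set (ropts K)" "Ls k = Rs K" using Krex by blast
    have "Rs (sumL (K # ys)) \<le> Ls (sumL (k # ys))" using R1[OF gKys rK[OF k(1)]] .
    moreover have "Ls (sumL (k # ys)) \<le> Ls k + Ls (sumL ys)" using IHk Kr k(1) by blast
    ultimately show ?thesis using k by simp
  qed
  have Mc: "Rs K + Ls (sumL ys) \<le> Ls (sumL (K # ys))"
  proof (cases "allnum ys")
    case True
    then show ?thesis using sumL_Cons_allnum[OF gK True] allnum_scores[OF True] nzK by simp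
  next
    case False
    from L2[OF gys False] obtain ys' where y: "lmove ys ys'" "Ls (sumL ys) = Rs (sumL ys')" by blast
    have "Rs (sumL (K # ys')) \<le> Ls (sumL (K # ys))" using L1[OF gKys lY[OF y(1)]] .
    moreover have "Rs K + Rs (sumL ys') \<le> Rs (sumL (K # ys'))"
      using IHy lmove_msize[OF y(1)] lmove_good[OF y(1) gys] by blast
    ultimately show ?thesis using y by simp
  qed
  have Mcp: "Rs (sumL (K # ys)) \<le> Ls K + Rs (sumL ys)"
  proof (cases "allnum ys")
    case True
    then show ?thesis using sumL_Cons_allnum[OF gK True] allnum_scores[OF True] nzK by simp
  next
    case False
    from R2[OF gys False] obtain ys' where y: "rmove ys ys'" "Rs (sumL ys) = Ls (sumL ys')" by blast
    have "Rs (sumL (K # ys)) \<le> Ls (sumL (K # ys'))" using R1[OF gKys rY[OF y(1)]] .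
    moreover have "Ls (sumL (K # ys')) \<le> Ls K + Ls (sumL ys')"
      using IHy rmove_msize[OF y(1)] rmove_good[OF y(1) gys] by blast
    ultimately show ?thesis using y by simp
  qed
  have Ma: "Rs K + Rs (sumL ys) \<le> Rs (sumL (K # ys))"
  proof (cases "allnum (K # ys)")
    case True
    then have "allnum ys" "is_num K" by auto
    then show ?thesis using sumL_Cons_allnum[OF gK] allnum_scores by simp
  next
    case False
    show ?thesis
    proof (rule R3[OF gKys False])
      fix zs assume "rmove (K # ys) zs"
      then consider (a) k where "k \<in> set (ropts K)" "zs = k # ys" | (b) ys' where "rmove ys ys'" "zs = K # ys'"
        by (auto simp: rmove_Cons)
      then show "Rs K + Rs (sumL ys) \<le> Ls (sumL zs)"
      proof cases
        case a
        have "Ls k + Rs (sumL ys) \<le> Ls (sumL (k # ys))" using IHk Kr a(1) by blast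
        then show ?thesis using Kr a by force
      next
        case b
        have "Rs K + Ls (sumL ys') \<le> Ls (sumL (K # ys'))"
          using IHy rmove_msize[OF b(1)] rmove_good[OF b(1) gys] by blast
        then show ?thesis using R1[OF gys b(1)] b by simp
      qed
    qed
  qed
  have Map: "Ls (sumL (K # ys)) \<le> Ls K + Ls (sumL ys)"
  proof (cases "allnum (K # ys)")
    case True
    then have "allnum ys" "is_num K" by auto
    then show ?thesis using sumL_Cons_allnum[OF gK] allnum_scores by simp
  next
    case False
    show ?thesis
    proof (rule L3[OF gKys False])
      fix zs assume "lmove (K # ys) zs"
      then consider (a) k where "k \<in> set (lopts K)" "zs = k # ys" | (b) ys' where "lmove ys ys'" "zs = K # ys'"
        by (auto simp: lmove_Cons)
      then show "Rs (sumL zs) \<le> Ls K + Ls (sumL ys)"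
      proof cases
        case a
        have "Rs (sumL (k # ys)) \<le> Rs k + Ls (sumL ys)" using IHk Kl a(1) by blast
        then show ?thesis using Kl a by force
      next
        case b
        have "Rs (sumL (K # ys')) \<le> Ls K + Rs (sumL ys')"
          using IHy lmove_msize[OF b(1)] lmove_good[OF b(1) gys] by blast
        then show ?thesis using L1[OF gys b(1)] b by simp
      qed
    qed
  qed
  show ?case using Ma Mb Mc Map Mbp Mcp by blast
qed

lemma sumL_nz: "allgood zs \<Longrightarrow> Rs (sumL zs) \<le> Ls (sumL zs)"
proof (cases zs)
  case (Cons z zs0)
  assume "allgood zs"
  then show ?thesis using milnor[of z zs0] Cons by force
qed simp

lemma sum_bounds: "allgood xs \<Longrightarrow>
   (\<Sum>x\<leftarrow>xs. Rs x) \<le> Rs (sumL xs) \<and> (\<Sum>x\<leftarrow>xs. Rs x) \<le> Ls (sumL xs) \<and>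
   Ls (sumL xs) \<le> (\<Sum>x\<leftarrow>xs. Ls x) \<and> Rs (sumL xs) \<le> (\<Sum>x\<leftarrow>xs. Ls x)"
proof (induction xs)
  case (Cons x xs)
  then have g: "good x" "allgood xs" by auto
  have nz: "Rs x \<le> Ls x" using g good_nz by blast
  from milnor[OF g] Cons.IH[OF g(2)] nz show ?case by auto
qed simp



lemma cool_eq: "cool H t = (if is_num H then H else if t \<le> temperature H then cool_tilde H t
     else num (Ls (cool_tilde H (temperature H))))"
  by (cases H) (simp add: temperature_def Let_def)

definition mast :: "sg \<Rightarrow> real" where "mast H = Ls (cool H (temperature H))"

definition TH :: "sg \<Rightarrow> bool" where
  "TH H \<longleftrightarrow> 0 \<le> temperature H \<and>
   (\<forall>u\<ge>0. good (cool H u)) \<and>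
   (\<forall>u v. 0 \<le> u \<longrightarrow> u \<le> v \<longrightarrow> Ls (cool H v) \<le> Ls (cool H u) \<and> Ls (cool H u) \<le> Ls (cool H v) + (v - u)
        \<and> Rs (cool H u) \<le> Rs (cool H v) \<and> Rs (cool H v) \<le> Rs (cool H u) + (v - u)) \<and>
   (\<forall>u\<ge>temperature H. Ls (cool H u) = mast H \<and> Rs (cool H u) = mast H) \<and>
   (\<forall>u>temperature H. cool H u = num (mast H)) \<and>
   Ls (cool H 0) = Ls H \<and> Rs (cool H 0) = Rs H \<and>
   (\<forall>u\<ge>0. \<forall>x\<in>set (lopts H). Rs (cool x u) - u \<le> Ls (cool H u)) \<and>
   (\<forall>u\<ge>0. \<forall>y\<in>set (ropts H). Rs (cool H u) \<le> Ls (cool y u) + u)"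

lemma TH_temp: "TH H \<Longrightarrow> 0 \<le> temperature H" unfolding TH_def by blast
lemma TH_good: "TH H \<Longrightarrow> 0 \<le> u \<Longrightarrow> good (cool H u)" unfolding TH_def by blast
lemma TH_mono: "TH H \<Longrightarrow> 0 \<le> u \<Longrightarrow> u \<le> v \<Longrightarrow> Ls (cool H v) \<le> Ls (cool H u) \<and> Ls (cool H u) \<le> Ls (cool H v) + (v - u)
        \<and> Rs (cool H u) \<le> Rs (cool H v) \<and> Rs (cool H v) \<le> Rs (cool H u) + (v - u)"
  unfolding TH_def by blast
lemma TH_hot: "TH H \<Longrightarrow> temperature H \<le> u \<Longrightarrow> Ls (cool H u) = mast H \<and> Rs (cool H u) = mast H"
  unfolding TH_def by blast
lemma TH_frozen: "TH H \<Longrightarrow> temperature H < u \<Longrightarrow> cool H u = num (mast H)"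
  unfolding TH_def by blast
lemma TH_zero: "TH H \<Longrightarrow> Ls (cool H 0) = Ls H \<and> Rs (cool H 0) = Rs H"
  unfolding TH_def by blast
lemma TH_lwall: "TH H \<Longrightarrow> 0 \<le> u \<Longrightarrow> x \<in> set (lopts H) \<Longrightarrow> Rs (cool x u) - u \<le> Ls (cool H u)"
  unfolding TH_def by blast
lemma TH_rwall: "TH H \<Longrightarrow> 0 \<le> u \<Longrightarrow> y \<in> set (ropts H) \<Longrightarrow> Rs (cool H u) \<le> Ls (cool y u) + u"
  unfolding TH_def by blast

lemma TH_below: "TH H \<Longrightarrow> 0 \<le> u \<Longrightarrow> Rs (cool H u) \<le> mast H \<and> mast H \<le> Ls (cool H u)"
proof -
  assume T: "TH H" and u: "0 \<le> u"
  show ?thesis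
  proof (cases "u \<le> temperature H")
    case True
    from TH_mono[OF T u True] TH_hot[OF T order_refl] show ?thesis by simp
  next
    case False
    then show ?thesis using TH_hot[OF T] by simp
  qed
qed

lemma TH_num: "TH (num a)"
proof -
  have n: "is_num (num a)" by (auto simp: is_num_def)
  then have c: "cool (num a) u = num a" for u by (simp add: cool_eq)
  have t: "temperature (num a) = 0" using n by (simp add: temperature_def)
  have m: "mast (num a) = a" by (simp add: mast_def c)
  show ?thesis unfolding TH_def using c t m by simp
qed


lemma Max_le_real: "finite A \<Longrightarrow> A \<noteq> {} \<Longrightarrow> (\<And>x. x \<in> A \<Longrightarrow> f x \<le> (c::real)) \<Longrightarrow> Max (f ` A) \<le> c"
  by (simp add: Max_le_iff)
lemma Max_ge_real: "finite A \<Longrightarrow> x \<in> A \<Longrightarrow> (f x :: real) \<le> Max (f ` A)"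
  by (simp add: Max_ge)
lemma Min_ge_real: "finite A \<Longrightarrow> A \<noteq> {} \<Longrightarrow> (\<And>x. x \<in> A \<Longrightarrow> (c::real) \<le> f x) \<Longrightarrow> c \<le> Min (f ` A)"
  by (simp add: Min_ge_iff)
lemma Min_le_real: "finite A \<Longrightarrow> x \<in> A \<Longrightarrow> Min (f ` A) \<le> (f x :: real)"
  by (simp add: Min_le)

lemma thermo_step:
  assumes H: "H = SG (Opts ls) (Opts rs)" and ne: "ls \<noteq> []" "rs \<noteq> []"
    and gl: "\<forall>x\<in>set ls. good x \<and> TH x" and gr: "\<forall>y\<in>set rs. good y \<and> TH y"
    and nz: "Rs H \<le> Ls H"
  shows "TH H"
proof -
  define LW where "LW u = Max ((\<lambda>x. Rs (cool x u) - u) ` set ls)" for u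
  define RW where "RW u = Min ((\<lambda>y. Ls (cool y u) + u) ` set rs)" for u
  define D where "D u = LW u - RW u" for u
  have nn: "\<not> is_num H" using H by (simp add: is_num_SG)
  have ct: "cool_tilde H u = SG (Opts (map (\<lambda>g. plus_sg (cool g u) (num (- u))) ls))
                                 (Opts (map (\<lambda>g. plus_sg (cool g u) (num u)) rs))" for u
    by (simp add: H)
  have tilde: "Ls (cool_tilde H u) = LW u \<and> Rs (cool_tilde H u) = RW u" if u: "0 \<le> u" for u
  proof -
    have a: "Rs (plus_sg (cool g u) (num (- u))) = Rs (cool g u) - u" if "g \<in> set ls" for g
      using that gl u by (simp add: plus_num shift_scores good_wf TH_good)
    have b: "Ls (plus_sg (cool g u) (num u)) = Ls (cool g u) + u" if "g \<in> set rs" for g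
      using that gr u by (simp add: plus_num shift_scores good_wf TH_good)
    show ?thesis unfolding ct LW_def RW_def
      by (simp add: Ls_Opts Rs_Opts image_image a b cong: image_cong)
  qed
  have LWmono: "LW v \<le> LW u \<and> LW u \<le> LW v + (v - u)" if "0 \<le> u" "u \<le> v" for u v
  proof
    show "LW v \<le> LW u" unfolding LW_def
    proof (rule Max_le_real)
      fix x assume x: "x \<in> set ls"
      have "Rs (cool x v) \<le> Rs (cool x u) + (v - u)" using TH_mono[of x u v] x gl that by blast
      then have "Rs (cool x v) - v \<le> Rs (cool x u) - u" by simp
      also have "\<dots> \<le> Max ((\<lambda>x. Rs (cool x u) - u) ` set ls)" using x by (intro Max_ge_real) auto
      finally show "Rs (cool x v) - v \<le> Max ((\<lambda>x. Rs (cool x u) - u) ` set ls)" .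
    qed (use ne in auto)
    show "LW u \<le> LW v + (v - u)" unfolding LW_def
    proof (rule Max_le_real)
      fix x assume x: "x \<in> set ls"
      have "Rs (cool x u) \<le> Rs (cool x v)" using TH_mono[of x u v] x gl that by blast
      moreover have "Rs (cool x v) - v \<le> Max ((\<lambda>x. Rs (cool x v) - v) ` set ls)" using x by (intro Max_ge_real) auto
      ultimately show "Rs (cool x u) - u \<le> Max ((\<lambda>x. Rs (cool x v) - v) ` set ls) + (v - u)" by simp
    qed (use ne in auto)
  qed
  have RWmono: "RW u \<le> RW v \<and> RW v \<le> RW u + (v - u)" if uv: "0 \<le> u" "u \<le> v" for u v
  proof
    show "RW u \<le> RW v" unfolding RW_def
    proof (rule Min_ge_real)
      fix y assume y: "y \<in> set rs"
      have "Ls (cool y u) \<le> Ls (cool y v) + (v - u)" using TH_mono[of y u v] y gr uv by blast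
      then have "Ls (cool y u) + u \<le> Ls (cool y v) + v" by simp
      have "Min ((\<lambda>y. Ls (cool y u) + u) ` set rs) \<le> Ls (cool y u) + u" using y by (intro Min_le_real) auto
      then show "Min ((\<lambda>y. Ls (cool y u) + u) ` set rs) \<le> Ls (cool y v) + v"
        using \<open>Ls (cool y u) + u \<le> Ls (cool y v) + v\<close> by linarith
    qed (use ne in auto)
    show "RW v \<le> RW u + (v - u)" unfolding RW_def
    proof -
      have "Min ((\<lambda>y. Ls (cool y v) + v) ` set rs) - (v - u) \<le> Min ((\<lambda>y. Ls (cool y u) + u) ` set rs)"
      proof -
        have "Min ((\<lambda>y. Ls (cool y v) + v) ` set rs) - (v - u) \<le> Ls (cool y u) + u" if y: "y \<in> set rs" for y
        proof -
          have "Ls (cool y v) \<le> Ls (cool y u)" using TH_mono[of y u v] y gr uv by blast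
          moreover have "Min ((\<lambda>y. Ls (cool y v) + v) ` set rs) \<le> Ls (cool y v) + v" using y by (intro Min_le_real) auto
          ultimately show ?thesis by simp
        qed
        then show ?thesis using ne by (intro Min_ge_real) auto
      qed
      then show "Min ((\<lambda>y. Ls (cool y v) + v) ` set rs) \<le> Min ((\<lambda>y. Ls (cool y u) + u) ` set rs) + (v - u)"
        by simp
    qed
  qed
  have Dmono: "D v \<le> D u" if "0 \<le> u" "u \<le> v" for u v
    using LWmono[OF that] RWmono[OF that] by (simp add: D_def)
  have Dlip: "\<bar>D v - D u\<bar> \<le> 2 * \<bar>v - u\<bar>" if "0 \<le> u" "0 \<le> v" for u v
  proof (cases "u \<le> v")
    case True
    then show ?thesis using LWmono[OF that(1) True] RWmono[OF that(1) True] by (simp add: D_def abs_if)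
  next
    case False
    then have vu: "v \<le> u" by simp
    show ?thesis using LWmono[OF that(2) vu] RWmono[OF that(2) vu] vu by (simp add: D_def abs_if)
  qed
  have LW0: "LW 0 = Ls H"
  proof -
    have "LW 0 = Max ((\<lambda>x. Rs x) ` set ls)" unfolding LW_def
      using gl TH_zero by (auto intro!: arg_cong[where f = Max] image_cong)
    then show ?thesis by (simp add: H Ls_Opts)
  qed
  have RW0: "RW 0 = Rs H"
  proof -
    have "RW 0 = Min ((\<lambda>x. Ls x) ` set rs)" unfolding RW_def
      using gr TH_zero by (auto intro!: arg_cong[where f = Min] image_cong)
    then show ?thesis by (simp add: H Rs_Opts)
  qed
  have D0: "0 \<le> D 0" using nz LW0 RW0 by (simp add: D_def)
  define Mx where "Mx = Max (mast ` set ls)"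
  define Mn where "Mn = Min (mast ` set rs)"
  have LWb: "LW u \<le> Mx - u" if "0 \<le> u" for u unfolding LW_def
  proof (rule Max_le_real)
    fix x assume x: "x \<in> set ls"
    have "Rs (cool x u) \<le> mast x" using TH_below[of x u] x gl that by blast
    moreover have "mast x \<le> Mx" unfolding Mx_def using x by (intro Max_ge_real) auto
    ultimately show "Rs (cool x u) - u \<le> Mx - u" by simp
  qed (use ne in auto)
  have RWb: "Mn + u \<le> RW u" if "0 \<le> u" for u unfolding RW_def
  proof (rule Min_ge_real)
    fix y assume y: "y \<in> set rs"
    have "mast y \<le> Ls (cool y u)" using TH_below[of y u] y gr that by blast
    moreover have "Mn \<le> mast y" unfolding Mn_def using y by (intro Min_le_real) auto
    ultimately show "Mn + u \<le> Ls (cool y u) + u" by simp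
  qed (use ne in auto)
  define b where "b = max 0 (Mx - Mn)"
  have b0: "0 \<le> b" by (simp add: b_def)
  have Db: "D b \<le> 0" using LWb[OF b0] RWb[OF b0] by (simp add: D_def b_def)
  have contD: "continuous_on {0..b} D"
    unfolding continuous_on_def
  proof
    fix x assume x: "x \<in> {0..b}"
    show "(D \<longlongrightarrow> D x) (at x within {0..b})"
    proof (rule tendstoI)
      fix e :: real assume e: "0 < e"
      show "\<forall>\<^sub>F y in at x within {0..b}. dist (D y) (D x) < e"
        unfolding eventually_at
      proof (intro exI[of _ "e / 2"] conjI ballI impI)
        show "0 < e / 2" using e by simp
        fix y assume y: "y \<in> {0..b}" and "y \<noteq> x \<and> dist y x < e / 2"
        then have "\<bar>y - x\<bar> < e / 2" by (simp add: dist_real_def)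
        moreover have "\<bar>D y - D x\<bar> \<le> 2 * \<bar>y - x\<bar>" using Dlip[of x y] x y by simp
        ultimately show "dist (D y) (D x) < e" by (simp add: dist_real_def)
      qed
    qed
  qed
  obtain z where z: "0 \<le> z" "z \<le> b" "D z = 0" using IVT2'[of D b 0 0, OF Db D0 b0 contD] by blast
  define Z where "Z = {u. 0 \<le> u \<and> Ls (cool_tilde H u) = Rs (cool_tilde H u)}"
  have Zeq: "Z = {u. 0 \<le> u \<and> D u = 0}" unfolding Z_def D_def using tilde by auto
  define t0 where "t0 = temperature H"
  have t0Z: "t0 = Inf Z" unfolding t0_def Z_def temperature_def using nn by simp
  have Zne: "Z \<noteq> {}" using z Zeq by auto
  have bddZ: "bdd_below Z" unfolding Zeq by (rule bdd_belowI[of _ 0]) auto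
  have t0ge: "0 \<le> t0" unfolding t0Z by (rule cInf_greatest[OF Zne]) (auto simp: Zeq)
  have t0le: "t0 \<le> u" if "u \<in> Z" for u unfolding t0Z using cInf_lower[OF that bddZ] .
  have Dt0: "D t0 = 0"
  proof -
    obtain z' where z': "z' \<in> Z" using Zne by blast
    have "D z' \<le> D t0" using Dmono[OF t0ge t0le[OF z']] .
    then have ge: "0 \<le> D t0" using z' Zeq by auto
    show ?thesis
    proof (rule ccontr)
      assume "D t0 \<noteq> 0"
      then have pos: "0 < D t0" using ge by simp
      have "t0 + D t0 / 2 \<le> u" if u: "u \<in> Z" for u
      proof -
        have u0: "0 \<le> u" "D u = 0" using u Zeq by auto
        have "\<bar>D u - D t0\<bar> \<le> 2 * \<bar>u - t0\<bar>" using Dlip[OF t0ge u0(1)] .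
        moreover have "t0 \<le> u" using t0le u by blast
        ultimately show ?thesis using u0 pos by (simp add: abs_if split: if_splits)
      qed
      then have "t0 + D t0 / 2 \<le> Inf Z" by (intro cInf_greatest[OF Zne]) auto
      then show False using pos t0Z by simp
    qed
  qed
  have LR0: "LW t0 = RW t0" using Dt0 by (simp add: D_def)
  have Dpos: "0 \<le> D u" if "0 \<le> u" "u \<le> t0" for u using Dmono[OF that] Dt0 by simp
  have coolH1: "cool H u = cool_tilde H u" if "u \<le> t0" for u
    using that nn by (simp add: cool_eq t0_def)
  have coolH2: "cool H u = num (LW t0)" if "t0 < u" for u
    using that nn t0ge tilde[OF t0ge] by (simp add: cool_eq t0_def)
  have mastH: "mast H = LW t0" unfolding mast_def using coolH1[of t0] tilde[OF t0ge] t0_def by simp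
  have LsH: "Ls (cool H u) = LW (min u t0) \<and> Rs (cool H u) = RW (min u t0)" if "0 \<le> u" for u
  proof (cases "u \<le> t0")
    case True
    then show ?thesis using coolH1 tilde that by simp
  next
    case False
    then show ?thesis using coolH2 LR0 by simp
  qed
  have c1: "\<forall>u\<ge>0. good (cool H u)"
  proof (intro allI impI)
    fix u :: real assume u: "0 \<le> u"
    show "good (cool H u)"
    proof (cases "u \<le> t0")
      case False
      then show ?thesis using coolH2 by simp
    next
      case True
      have nzu: "Rs (cool_tilde H u) \<le> Ls (cool_tilde H u)" using tilde[OF u] Dpos[OF u True] by (simp add: D_def)
      have "good (cool_tilde H u)"
        unfolding ct good.simps
      proof (intro conjI ballI)
        show "map (\<lambda>g. plus_sg (cool g (u)) (num (- u))) ls \<noteq> []" using ne by simp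
        show "map (\<lambda>g. plus_sg (cool g (u)) (num u)) rs \<noteq> []" using ne by simp
        fix g assume "g \<in> set (map (\<lambda>g. plus_sg (cool g u) (num (- u))) ls)"
        then show "good g" using gl u by (auto simp: plus_num intro!: good_shift TH_good)
      next
        fix g assume "g \<in> set (map (\<lambda>g. plus_sg (cool g u) (num u)) rs)"
        then show "good g" using gr u by (auto simp: plus_num intro!: good_shift TH_good)
      next
        show "Rs (SG (Opts (map (\<lambda>g. plus_sg (cool g u) (num (- u))) ls)) (Opts (map (\<lambda>g. plus_sg (cool g u) (num u)) rs)))
          \<le> Ls (SG (Opts (map (\<lambda>g. plus_sg (cool g u) (num (- u))) ls)) (Opts (map (\<lambda>g. plus_sg (cool g u) (num u)) rs)))"
          using nzu unfolding ct .
      qed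
      then show ?thesis using coolH1[OF True] by simp
    qed
  qed
  have c2: "\<forall>u v. 0 \<le> u \<longrightarrow> u \<le> v \<longrightarrow> Ls (cool H v) \<le> Ls (cool H u) \<and> Ls (cool H u) \<le> Ls (cool H v) + (v - u)
        \<and> Rs (cool H u) \<le> Rs (cool H v) \<and> Rs (cool H v) \<le> Rs (cool H u) + (v - u)"
  proof (intro allI impI)
    fix u v :: real assume uv: "0 \<le> u" "u \<le> v"
    have m: "0 \<le> min u t0" "min u t0 \<le> min v t0" "min v t0 - min u t0 \<le> v - u"
      using uv t0ge by auto
    show "Ls (cool H v) \<le> Ls (cool H u) \<and> Ls (cool H u) \<le> Ls (cool H v) + (v - u)
        \<and> Rs (cool H u) \<le> Rs (cool H v) \<and> Rs (cool H v) \<le> Rs (cool H u) + (v - u)"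
      using LsH[of u] LsH[of v] uv LWmono[OF m(1) m(2)] RWmono[OF m(1) m(2)] m(3) by auto
  qed
  have c3: "\<forall>u\<ge>temperature H. Ls (cool H u) = mast H \<and> Rs (cool H u) = mast H"
    using LsH t0ge mastH LR0 unfolding t0_def[symmetric] by (auto simp: min_def)
  have c4: "\<forall>u>temperature H. cool H u = num (mast H)"
    using coolH2 mastH unfolding t0_def[symmetric] by auto
  have c5: "Ls (cool H 0) = Ls H \<and> Rs (cool H 0) = Rs H"
    using LsH[of 0] t0ge LW0 RW0 by simp
  have c6: "\<forall>u\<ge>0. \<forall>x\<in>set (lopts H). Rs (cool x u) - u \<le> Ls (cool H u)"
  proof (intro allI impI ballI)
    fix u :: real and x assume u: "0 \<le> u" and x: "x \<in> set (lopts H)"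
    then have x': "x \<in> set ls" using H by simp
    have "Rs (cool x u) - u \<le> LW (min u t0)"
    proof (cases "u \<le> t0")
      case True
      then show ?thesis unfolding LW_def using x' by (simp add: Max_ge_real)
    next
      case False
      have "Rs (cool x u) \<le> Rs (cool x t0) + (u - t0)" using TH_mono[of x t0 u] x' gl t0ge False by auto
      moreover have "Rs (cool x t0) - t0 \<le> LW t0" unfolding LW_def using x' by (simp add: Max_ge_real)
      ultimately show ?thesis using False by simp
    qed
    then show "Rs (cool x u) - u \<le> Ls (cool H u)" using LsH[OF u] by simp
  qed
  have c7: "\<forall>u\<ge>0. \<forall>y\<in>set (ropts H). Rs (cool H u) \<le> Ls (cool y u) + u"
  proof (intro allI impI ballI)
    fix u :: real and y assume u: "0 \<le> u" and y: "y \<in> set (ropts H)"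
    then have y': "y \<in> set rs" using H by simp
    have "RW (min u t0) \<le> Ls (cool y u) + u"
    proof (cases "u \<le> t0")
      case True
      then show ?thesis unfolding RW_def using y' by (simp add: Min_le_real)
    next
      case False
      have "Ls (cool y t0) \<le> Ls (cool y u) + (u - t0)" using TH_mono[of y t0 u] y' gr t0ge False by auto
      moreover have "RW t0 \<le> Ls (cool y t0) + t0" unfolding RW_def using y' by (simp add: Min_le_real)
      ultimately show ?thesis using False by simp
    qed
    then show "Rs (cool H u) \<le> Ls (cool y u) + u" using LsH[OF u] by simp
  qed
  show ?thesis unfolding TH_def using t0ge c1 c2 c3 c4 c5 c6 c7 unfolding t0_def by blast
qed

lemma good_TH: "good H \<Longrightarrow> TH H"
proof (induction H)
  case (SG L R)
  from SG.prems show ?case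
  proof (cases rule: good_cases)
    case (1 a) then show ?thesis using TH_num by simp
  next
    case (2 ls rs)
    have "\<forall>x\<in>set ls. good x \<and> TH x" using 2 SG.IH by auto
    moreover have "\<forall>x\<in>set rs. good x \<and> TH x" using 2 SG.IH by auto
    ultimately show ?thesis using thermo_step 2 by blast
  qed
qed



definition coolL :: "real \<Rightarrow> sg list \<Rightarrow> sg list" where "coolL u S = map (\<lambda>H. cool H u) S"

lemma cool_numH: "is_num H \<Longrightarrow> cool H u = H" by (simp add: cool_eq)

lemma cool_hot:
  assumes "good H" "\<not> is_num H" "u \<le> temperature H"
  shows "lopts (cool H u) = map (\<lambda>x. shift (cool x u) (- u)) (lopts H)
       \<and> ropts (cool H u) = map (\<lambda>y. shift (cool y u) u) (ropts H)"
  using assms(1)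
proof (cases rule: good_cases)
  case (1 a) then show ?thesis using assms(2) by (auto simp: is_num_def)
next
  case (2 ls rs)
  have "cool H u = cool_tilde H u" using assms by (subst cool_eq) simp
  then show ?thesis using 2 by (simp add: plus_num)
qed

lemma isnum_cool: "good H \<Longrightarrow> is_num (cool H u) \<longleftrightarrow> is_num H \<or> temperature H < u"
proof -
  assume g: "good H"
  show ?thesis
  proof (cases "is_num H")
    case True then show ?thesis by (simp add: cool_numH)
  next
    case False
    show ?thesis
    proof (cases "u \<le> temperature H")
      case True
      have "cool H u = cool_tilde H u" using True False by (subst cool_eq) simp
      moreover from g have "\<not> is_num (cool_tilde H u)"
      proof (cases rule: good_cases)
        case (2 ls rs)
        then show ?thesis by (simp add: is_num_SG)
      qed (use False in \<open>auto simp: is_num_def\<close>)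
      ultimately show ?thesis using True False by simp
    next
      case F2: False
      have "cool H u = num (Ls (cool_tilde H (temperature H)))" using F2 False by (subst cool_eq) simp
      then show ?thesis using F2 False by (auto simp: is_num_def)
    qed
  qed
qed

lemma allgood_coolL: "allgood S \<Longrightarrow> 0 \<le> u \<Longrightarrow> allgood (coolL u S)"
  unfolding allgood_def coolL_def using good_TH TH_good by auto

lemma coolL_update: "i < length S \<Longrightarrow> coolL u (S[i := x]) = (coolL u S)[i := cool x u]"
  by (simp add: coolL_def map_update)

lemma coolL_allnum: "allnum S \<Longrightarrow> coolL u S = S"
  unfolding coolL_def allnum_def by (simp add: cool_numH map_idI)

lemma sumL_update_shift: "i < length xs \<Longrightarrow> sumL (xs[i := shift (xs ! i) c]) = shift (sumL xs) c"
proof (induction xs arbitrary: i)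
  case (Cons x xs)
  then show ?case by (cases i) (auto simp: plus_shift_left plus_shift_right)
qed simp

lemma length_coolL[simp]: "length (coolL u S) = length S" by (simp add: coolL_def)
lemma nth_coolL[simp]: "i < length S \<Longrightarrow> coolL u S ! i = cool (S ! i) u" by (simp add: coolL_def)

lemma perm_front: "j < length X \<Longrightarrow> mset (X[j := K]) = mset (K # remove1 (X ! j) X)
   \<and> mset X = mset (X ! j # remove1 (X ! j) X)"
  by (simp add: mset_update mset_remove1)

lemma allgood_update: "allgood xs \<Longrightarrow> good K \<Longrightarrow> allgood (xs[j := K])"
proof -
  assume a: "allgood xs" "good K"
  show ?thesis unfolding allgood_def
  proof
    fix x assume "x \<in> set (xs[j := K])"
    then have "x \<in> insert K (set xs)" using set_update_subset_insert[of xs j K] by (rule subsetD[rotated])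
    then show "good x" using a by (auto simp: allgood_def)
  qed
qed

lemma cool_bounds:
  "allgood S \<Longrightarrow> 0 \<le> u \<Longrightarrow>
    Ls (sumL (coolL u S)) \<le> Ls (sumL S) \<and> Rs (sumL (coolL u S)) - u \<le> Rs (sumL S) \<and>
    Rs (sumL S) \<le> Rs (sumL (coolL u S)) \<and> Ls (sumL S) \<le> Ls (sumL (coolL u S)) + u"
proof (induction "msize S" arbitrary: S u rule: less_induct)
  case less
  note IH = less.hyps
  have gS: "allgood S" by fact
  have goodi: "good (S ! i)" if "i < length S" for i using gS that by (simp add: allgood_def)
  have THi: "TH (S ! i)" if "i < length S" for i using goodi[OF that] good_TH by blast
  have IHl: "Ls (sumL (coolL w S')) \<le> Ls (sumL S') \<and> Rs (sumL (coolL w S')) - w \<le> Rs (sumL S') \<and>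
    Rs (sumL S') \<le> Rs (sumL (coolL w S')) \<and> Ls (sumL S') \<le> Ls (sumL (coolL w S')) + w"
    if "lmove S S'" "0 \<le> w" for S' w
    using IH[OF lmove_msize[OF that(1)] lmove_good[OF that(1) gS] that(2)] .
  have IHr: "Ls (sumL (coolL w S')) \<le> Ls (sumL S') \<and> Rs (sumL (coolL w S')) - w \<le> Rs (sumL S') \<and>
    Rs (sumL S') \<le> Rs (sumL (coolL w S')) \<and> Ls (sumL S') \<le> Ls (sumL (coolL w S')) + w"
    if "rmove S S'" "0 \<le> w" for S' w
    using IH[OF rmove_msize[OF that(1)] rmove_good[OF that(1) gS] that(2)] .
  have C1a: "Ls (sumL (coolL w S)) \<le> Ls (sumL S)" if w: "0 \<le> w" "\<not> allnum (coolL w S)" for w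
  proof (rule L3[OF allgood_coolL[OF gS w(1)] w(2)])
    fix Y assume "lmove (coolL w S) Y"
    then obtain i g where i: "i < length S" "g \<in> set (lopts (cool (S ! i) w))" "Y = (coolL w S)[i := g]"
      unfolding lmove_def by auto
    have nn: "\<not> is_num (cool (S ! i) w)" using i(2) is_num_lopts TH_good[OF THi[OF i(1)] w(1)] by force
    then have nn': "\<not> is_num (S ! i)" "w \<le> temperature (S ! i)"
      using isnum_cool[OF goodi[OF i(1)]] by auto
    from cool_hot[OF goodi[OF i(1)] nn'] i(2) obtain x where x: "x \<in> set (lopts (S ! i))" "g = shift (cool x w) (- w)"
      by auto
    define S' where "S' = S[i := x]"
    have mv: "lmove S S'" unfolding lmove_def S'_def using i x by auto
    have cS': "coolL w S' = (coolL w S)[i := cool x w]" unfolding S'_def using i coolL_update by blast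
    have Ye: "Y = (coolL w S')[i := shift (coolL w S' ! i) (- w)]" using i x cS' by (simp add: S'_def)
    have li: "i < length (coolL w S')" using i by (simp add: S'_def)
    have "sumL Y = shift (sumL (coolL w S')) (- w)" using sumL_update_shift[OF li, of "(- w)"] Ye by simp
    moreover have "wf_sg (sumL (coolL w S'))"
      using wf_sumL allgood_coolL lmove_good[OF mv gS] w(1) by blast
    ultimately have "Rs (sumL Y) = Rs (sumL (coolL w S')) - w" using shift_scores by simp
    also have "\<dots> \<le> Rs (sumL S')" using IHl[OF mv w(1)] by simp
    also have "\<dots> \<le> Ls (sumL S)" using L1[OF gS mv] .
    finally show "Rs (sumL Y) \<le> Ls (sumL S)" .
  qed
  have C3a: "Rs (sumL S) \<le> Rs (sumL (coolL w S))" if w: "0 \<le> w" "\<not> allnum (coolL w S)" for w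
  proof (rule R3[OF allgood_coolL[OF gS w(1)] w(2)])
    fix Y assume "rmove (coolL w S) Y"
    then obtain i g where i: "i < length S" "g \<in> set (ropts (cool (S ! i) w))" "Y = (coolL w S)[i := g]"
      unfolding rmove_def by auto
    have nn: "\<not> is_num (cool (S ! i) w)" using i(2) is_num_ropts TH_good[OF THi[OF i(1)] w(1)] by force
    then have nn': "\<not> is_num (S ! i)" "w \<le> temperature (S ! i)"
      using isnum_cool[OF goodi[OF i(1)]] by auto
    from cool_hot[OF goodi[OF i(1)] nn'] i(2) obtain x where x: "x \<in> set (ropts (S ! i))" "g = shift (cool x w) w"
      by auto
    define S' where "S' = S[i := x]"
    have mv: "rmove S S'" unfolding rmove_def S'_def using i x by auto
    have cS': "coolL w S' = (coolL w S)[i := cool x w]" unfolding S'_def using i coolL_update by blast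
    have Ye: "Y = (coolL w S')[i := shift (coolL w S' ! i) w]" using i x cS' by (simp add: S'_def)
    have li: "i < length (coolL w S')" using i by (simp add: S'_def)
    have "sumL Y = shift (sumL (coolL w S')) w" using sumL_update_shift[OF li, of "w"] Ye by simp
    moreover have "wf_sg (sumL (coolL w S'))"
      using wf_sumL allgood_coolL rmove_good[OF mv gS] w(1) by blast
    ultimately have "Ls (sumL Y) = Ls (sumL (coolL w S')) + w" using shift_scores by simp
    moreover have "Ls (sumL S') \<le> Ls (sumL (coolL w S')) + w" using IHr[OF mv w(1)] by simp
    moreover have "Rs (sumL S) \<le> Ls (sumL S')" using R1[OF gS mv] .
    ultimately show "Rs (sumL S) \<le> Ls (sumL Y)" by simp
  qed
  have frozen: "Ls (sumL S) \<ge> Ls (sumL (coolL u S)) \<and> Rs (sumL S) \<le> Rs (sumL (coolL u S))"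
    if an: "allnum (coolL u S)" "\<not> allnum S"
  proof -
    define NS where "NS = {H \<in> set S. \<not> is_num H}"
    have NSne: "NS \<noteq> {}" using an(2) unfolding NS_def allnum_def by auto
    have NSfin: "finite NS" unfolding NS_def by simp
    define v where "v = Max (temperature ` NS)"
    have gH: "good H" if "H \<in> set S" for H using gS that by (simp add: allgood_def)
    have tu: "temperature H < u" if "H \<in> NS" for H
    proof -
      have "H \<in> set S" "\<not> is_num H" using that by (auto simp: NS_def)
      moreover have "is_num (cool H u)" using an(1) \<open>H \<in> set S\<close> by (auto simp: allnum_def coolL_def)
      ultimately show ?thesis using isnum_cool[OF gH] by blast
    qed
    have vin: "v \<in> temperature ` NS" unfolding v_def using NSne NSfin by (intro Max_in) auto
    then obtain H0 where H0: "H0 \<in> NS" "temperature H0 = v" by auto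
    have vu: "v < u" using tu H0 by auto
    have v0: "0 \<le> v" using H0 TH_temp good_TH gH by (auto simp: NS_def)
    have tv: "temperature H \<le> v" if "H \<in> set S" for H
    proof (cases "is_num H")
      case True then show ?thesis using v0 by (simp add: temperature_def)
    next
      case False then have "H \<in> NS" using that by (simp add: NS_def)
      then show ?thesis unfolding v_def using NSfin by (intro Max_ge_real) auto
    qed
    have nv: "\<not> allnum (coolL v S)"
    proof
      assume "allnum (coolL v S)"
      then have "is_num (cool H0 v)" using H0 by (auto simp: allnum_def coolL_def NS_def)
      then show False using isnum_cool[OF gH] H0 by (auto simp: NS_def)
    qed
    have sumv: "(\<Sum>x\<leftarrow>coolL v S. Rs x) = (\<Sum>H\<leftarrow>S. mast H)" "(\<Sum>x\<leftarrow>coolL v S. Ls x) = (\<Sum>H\<leftarrow>S. mast H)"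
      unfolding coolL_def using TH_hot good_TH gH tv by (auto simp: o_def intro!: arg_cong[where f = sum_list] map_cong)
    have sumu: "(\<Sum>x\<leftarrow>coolL u S. Ls x) = (\<Sum>H\<leftarrow>S. mast H)"
      unfolding coolL_def using TH_hot good_TH gH tv vu
      by (auto simp: o_def intro!: arg_cong[where f = sum_list] map_cong) (meson less_eq_real_def order_trans)
    have "Ls (sumL (coolL u S)) = (\<Sum>H\<leftarrow>S. mast H)" "Rs (sumL (coolL u S)) = (\<Sum>H\<leftarrow>S. mast H)"
      using allnum_scores[OF an(1)] sumu by auto
    moreover have "(\<Sum>H\<leftarrow>S. mast H) \<le> Ls (sumL (coolL v S))" "Rs (sumL (coolL v S)) \<le> (\<Sum>H\<leftarrow>S. mast H)"
      using sum_bounds[OF allgood_coolL[OF gS v0]] sumv by auto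
    moreover have "Ls (sumL (coolL v S)) \<le> Ls (sumL S)" "Rs (sumL S) \<le> Rs (sumL (coolL v S))"
      using C1a[OF v0 nv] C3a[OF v0 nv] by auto
    ultimately show ?thesis by auto
  qed
  have C13: "Ls (sumL (coolL u S)) \<le> Ls (sumL S) \<and> Rs (sumL S) \<le> Rs (sumL (coolL u S))"
  proof (cases "allnum (coolL u S)")
    case False then show ?thesis using C1a C3a less.prems(2) by blast
  next
    case True
    show ?thesis
    proof (cases "allnum S")
      case True then show ?thesis using coolL_allnum by simp
    next
      case False then show ?thesis using frozen True by blast
    qed
  qed
  have C2: "Rs (sumL (coolL u S)) - u \<le> Rs (sumL S)"
  proof (cases "allnum S")
    case True then show ?thesis using coolL_allnum less.prems(2) by simp
  next
    case False
    show ?thesis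
    proof (rule R3[OF gS False])
      fix S' assume mv: "rmove S S'"
      then obtain j y where j: "j < length S" "y \<in> set (ropts (S ! j))" "S' = S[j := y]"
        unfolding rmove_def by auto
      have u: "0 \<le> u" by fact
      define X where "X = coolL u S"
      have gX: "allgood X" unfolding X_def using allgood_coolL gS u by blast
      have cS': "coolL u S' = X[j := cool y u]" unfolding X_def using j coolL_update by blast
      have h1: "Ls (sumL (coolL u S')) \<le> Ls (sumL S')" using IHr[OF mv u] by simp
      have nnj: "\<not> is_num (S ! j)" using j(2) is_num_ropts goodi[OF j(1)] by force
      have gy: "good y" using ropt_good[OF goodi[OF j(1)] j(2)] .
      have gK: "good (cool y u)" using TH_good[OF good_TH[OF gy] u] .
      show "Rs (sumL (coolL u S)) - u \<le> Ls (sumL S')"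
      proof (cases "u \<le> temperature (S ! j)")
        case True
        have "shift (cool y u) u \<in> set (ropts (cool (S ! j) u))"
          using cool_hot[OF goodi[OF j(1)] nnj True] j(2) by auto
        then have "rmove X (X[j := shift (cool y u) u])" unfolding rmove_def X_def using j by force
        then have ineq: "Rs (sumL X) \<le> Ls (sumL (X[j := shift (cool y u) u]))" using R1[OF gX] by blast
        have "X[j := shift (cool y u) u] = (coolL u S')[j := shift (coolL u S' ! j) u]"
          using cS' j by (simp add: X_def)
        moreover have "j < length (coolL u S')" using j by simp
        ultimately have "sumL (X[j := shift (cool y u) u]) = shift (sumL (coolL u S')) u"
          using sumL_update_shift by metis
        moreover have "wf_sg (sumL (coolL u S'))"
          using wf_sumL allgood_coolL rmove_good[OF mv gS] u by blast
        ultimately have "Rs (sumL X) \<le> Ls (sumL (coolL u S')) + u" using shift_scores ineq by simp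
        then show ?thesis using h1 X_def by simp
      next
        case False
        then have fr: "X ! j = num (mast (S ! j))" unfolding X_def using j TH_frozen[OF THi[OF j(1)]] by simp
        define m where "m = mast (S ! j)"
        have wall: "m \<le> Ls (cool y u) + u"
          using TH_rwall[OF THi[OF j(1)] u j(2)] TH_frozen[OF THi[OF j(1)]] False by (simp add: m_def)
        define rest where "rest = remove1 (X ! j) X"
        have jX: "j < length X" unfolding X_def using j by simp
        have grest: "allgood rest" using gX unfolding rest_def allgood_def by (meson notin_set_remove1)
        have e1: "mset (X[j := cool y u]) = mset (cool y u # rest)"
          using perm_front[OF jX] unfolding rest_def by blast
        have p1: "Ls (sumL (X[j := cool y u])) = Ls (sumL (cool y u # rest))"
          using conjunct1[OF perm_scores[OF allgood_update[OF gX gK] e1]] .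
        have e2: "mset X = mset (X ! j # rest)"
          using perm_front[OF jX] unfolding rest_def by blast
        have p2: "Rs (sumL X) = Rs (sumL (num m # rest))"
          using conjunct2[OF perm_scores[OF gX e2]] fr m_def by simp
        have "Ls (cool y u) + Rs (sumL rest) \<le> Ls (sumL (cool y u # rest))" using milnor[OF gK grest] by blast
        moreover have "Rs (sumL (num m # rest)) = Rs (sumL rest) + m" using sumL_num_Cons[OF grest] by simp
        ultimately have "Rs (sumL X) - u \<le> Ls (sumL (X[j := cool y u]))" using p1 p2 wall by simp
        then show ?thesis using h1 cS' X_def by simp
      qed
    qed
  qed
  have C4: "Ls (sumL S) \<le> Ls (sumL (coolL u S)) + u"
  proof (cases "allnum S")
    case True then show ?thesis using coolL_allnum less.prems(2) by simp
  next
    case False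
    show ?thesis
    proof (rule L3[OF gS False])
      fix S' assume mv: "lmove S S'"
      then obtain j y where j: "j < length S" "y \<in> set (lopts (S ! j))" "S' = S[j := y]"
        unfolding lmove_def by auto
      have u: "0 \<le> u" by fact
      define X where "X = coolL u S"
      have gX: "allgood X" unfolding X_def using allgood_coolL gS u by blast
      have cS': "coolL u S' = X[j := cool y u]" unfolding X_def using j coolL_update by blast
      have h1: "Rs (sumL S') \<le> Rs (sumL (coolL u S'))" using IHl[OF mv u] by simp
      have nnj: "\<not> is_num (S ! j)" using j(2) is_num_lopts goodi[OF j(1)] by force
      have gy: "good y" using lopt_good[OF goodi[OF j(1)] j(2)] .
      have gK: "good (cool y u)" using TH_good[OF good_TH[OF gy] u] .
      show "Rs (sumL S') \<le> Ls (sumL (coolL u S)) + u"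
      proof (cases "u \<le> temperature (S ! j)")
        case True
        have "shift (cool y u) (- u) \<in> set (lopts (cool (S ! j) u))"
          using cool_hot[OF goodi[OF j(1)] nnj True] j(2) by auto
        then have "lmove X (X[j := shift (cool y u) (- u)])" unfolding lmove_def X_def using j by force
        then have ineq: "Rs (sumL (X[j := shift (cool y u) (- u)])) \<le> Ls (sumL X)" using L1[OF gX] by blast
        have "X[j := shift (cool y u) (- u)] = (coolL u S')[j := shift (coolL u S' ! j) (- u)]"
          using cS' j by (simp add: X_def)
        moreover have "j < length (coolL u S')" using j by simp
        ultimately have "sumL (X[j := shift (cool y u) (- u)]) = shift (sumL (coolL u S')) (- u)"
          using sumL_update_shift by metis
        moreover have "wf_sg (sumL (coolL u S'))"
          using wf_sumL allgood_coolL lmove_good[OF mv gS] u by blast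
        ultimately have "Rs (sumL (coolL u S')) - u \<le> Ls (sumL X)" using shift_scores ineq by simp
        then show ?thesis using h1 X_def by simp
      next
        case False
        then have fr: "X ! j = num (mast (S ! j))" unfolding X_def using j TH_frozen[OF THi[OF j(1)]] by simp
        define m where "m = mast (S ! j)"
        have wall: "Rs (cool y u) - u \<le> m"
          using TH_lwall[OF THi[OF j(1)] u j(2)] TH_frozen[OF THi[OF j(1)]] False by (simp add: m_def)
        define rest where "rest = remove1 (X ! j) X"
        have jX: "j < length X" unfolding X_def using j by simp
        have grest: "allgood rest" using gX unfolding rest_def allgood_def by (meson notin_set_remove1)
        have e1: "mset (X[j := cool y u]) = mset (cool y u # rest)"
          using perm_front[OF jX] unfolding rest_def by blast
        have p1: "Rs (sumL (X[j := cool y u])) = Rs (sumL (cool y u # rest))"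
          using conjunct2[OF perm_scores[OF allgood_update[OF gX gK] e1]] .
        have e2: "mset X = mset (X ! j # rest)"
          using perm_front[OF jX] unfolding rest_def by blast
        have p2: "Ls (sumL X) = Ls (sumL (num m # rest))"
          using conjunct1[OF perm_scores[OF gX e2]] fr m_def by simp
        have "Rs (sumL (cool y u # rest)) \<le> Rs (cool y u) + Ls (sumL rest)" using milnor[OF gK grest] by blast
        moreover have "Ls (sumL (num m # rest)) = Ls (sumL rest) + m" using sumL_num_Cons[OF grest] by simp
        ultimately have "Rs (sumL (X[j := cool y u])) \<le> Ls (sumL X) + u" using p1 p2 wall by simp
        then show ?thesis using h1 cS' X_def by simp
      qed
    qed
  qed
  show ?case using C13 C2 C4 by blast
qed



lemma times_sumL: "times_sg n G = sumL (replicate n G)"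
  by (induction n) auto

lemma pos_wf: "position G H \<Longrightarrow> wf_sg G \<Longrightarrow> wf_sg H"
proof (induction rule: position.induct)
  case (left ls R g) then show ?case by auto
next
  case (right L rs g) then show ?case by auto
qed simp

lemma assms_good:
  assumes w: "wf_sg G" and d: "dicotic G" and nz: "nonzugzwang G" and t: "terminals_are_numbers G"
  shows "position G H \<Longrightarrow> good H"
proof (induction H)
  case (SG L R)
  have wH: "wf_sg (SG L R)" using pos_wf[OF SG.prems w] .
  have dic: "(\<exists>a. L = Emp a) \<longleftrightarrow> (\<exists>b. R = Emp b)" using d SG.prems unfolding dicotic_def by blast
  show ?case
  proof (cases L; cases R)
    fix a b assume L: "L = Emp a" and R: "R = Emp b"
    then have "a = b" using t SG.prems unfolding terminals_are_numbers_def by blast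
    then show ?thesis using L R by simp
  next
    fix ls rs assume L: "L = Opts ls" and R: "R = Opts rs"
    have "good g" if "g \<in> set ls" for g
      using SG.IH[of g] that L position.left[OF SG.prems[unfolded L]] by auto
    moreover have "good g" if "g \<in> set rs" for g
      using SG.IH[of g] that R position.right[OF SG.prems[unfolded R]] by auto
    moreover have "Rs (SG L R) \<le> Ls (SG L R)" using nz SG.prems unfolding nonzugzwang_def by blast
    ultimately show ?thesis using L R wH by auto
  qed (use dic in auto)
qed

theorem mainTheorem4:
  fixes G :: sg
  assumes "wf_sg G"
    and "dicotic G"
    and "nonzugzwang G"
    and "terminals_are_numbers G"
  shows "Ls (cool G (temperature G)) = mean G \<and> Rs (cool G (temperature G)) = mean G"
proof -
  have gG: "good G" using assms_good[OF assms position.self] .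
  have T: "TH G" using good_TH[OF gG] .
  define m where "m = mast G"
  define t where "t = temperature G"
  have hot: "Ls (cool G t) = m \<and> Rs (cool G t) = m" unfolding m_def t_def using TH_hot[OF T order_refl] .
  define T1 where "T1 = t + 1"
  have t0: "0 \<le> t" unfolding t_def using TH_temp[OF T] .
  have T10: "0 \<le> T1" unfolding T1_def using t0 by simp
  have bnd: "real n * m \<le> Ls (times_sg n G) \<and> Ls (times_sg n G) \<le> real n * m + T1" for n
  proof -
    define S where "S = replicate n G"
    have gS: "allgood S" unfolding S_def allgood_def using gG by simp
    have cS: "coolL T1 S = replicate n (num m)"
      unfolding S_def coolL_def m_def using TH_frozen[OF T, of T1] by (simp add: T1_def t_def)
    have an: "allnum (coolL T1 S)" unfolding cS allnum_def by (auto simp: is_num_def)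
    have "Ls (sumL (coolL T1 S)) = real n * m"
      using allnum_scores[OF an] unfolding cS by (simp add: sum_list_replicate)
    then show ?thesis using cool_bounds[OF gS T10] unfolding times_sumL S_def by simp
  qed
  have lim: "(\<lambda>n. Ls (times_sg n G) / real n) \<longlonglongrightarrow> m"
  proof (rule tendsto_sandwich[of "\<lambda>n. m" _ _ "\<lambda>n. m + T1 / real n"])
    show "\<forall>\<^sub>F n in sequentially. m \<le> Ls (times_sg n G) / real n"
    proof (rule eventually_sequentiallyI[of 1])
      fix n :: nat assume "1 \<le> n"
      then have "0 < real n" by simp
      then show "m \<le> Ls (times_sg n G) / real n" using bnd[of n] by (simp add: pos_le_divide_eq mult.commute)
    qed
    show "\<forall>\<^sub>F n in sequentially. Ls (times_sg n G) / real n \<le> m + T1 / real n"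
    proof (rule eventually_sequentiallyI[of 1])
      fix n :: nat assume "1 \<le> n"
      then have n: "0 < real n" by simp
      have "Ls (times_sg n G) / real n \<le> (real n * m + T1) / real n"
        using bnd[of n] n by (simp add: divide_right_mono)
      also have "\<dots> = m + T1 / real n" using n by (simp add: field_simps)
      finally show "Ls (times_sg n G) / real n \<le> m + T1 / real n" .
    qed
    show "(\<lambda>n. m) \<longlonglongrightarrow> m" by simp
    have "(\<lambda>n. m + T1 / real n) \<longlonglongrightarrow> m + 0"
      by (intro tendsto_add tendsto_const lim_const_over_n)
    then show "(\<lambda>n. m + T1 / real n) \<longlonglongrightarrow> m" by simp
  qed
  have "mean G = m" unfolding mean_def using limI[OF lim] .
  then show ?thesis using hot unfolding t_def by simp
qed


end
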